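(* If $G=(U,E)$ is a binary tree, then there exists a category system $\mathcal S\subset 2^U$ such that $(G,\mathcal S)$ is shattered and internally connected and $\operatorname{memdim}(\mathcal S)=O(\operatorname{diam}(G)^2)$.
   Context: A binary tree here is a tree that can be rooted so that every vertex has at most two children. For $u\in U$ let $\mathrm{cat}(u)=\{C\in\mathcal S: u\in C\}$; $\operatorname{memdim}(\mathcal S)=\max_{u\in U}|\mathrm{cat}(u)|$. $\operatorname{diam}(G)$ is the maximum shortest-path distance between two vertices of $G$. $N(s)$ is the neighbor set of $s$. $(G,\mathcal S)$ is internally connected if for every $C\in\mathcal S$ the subgraph of $G$ induced by $C$ is connected. $(G,\mathcal S)$ is shattered if for all $s\neq t$ in $U$ there exist $u\in N(s)$ and $C\in\mathcal S$ with $u,t\in C$ and $s\notin C$ (possibly $u=t$). *)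

theory Defs
  imports Main
begin

text \<open>Simple finite graphs G = (U, E): E is a set of 2-element subsets of U.
  Vertices are natural numbers (every finite graph is isomorphic to such a graph).\<close>

definition graph :: "nat set \<Rightarrow> nat set set \<Rightarrow> bool" where
  "graph U E \<longleftrightarrow> finite U \<and> (\<forall>e\<in>E. \<exists>u v. e = {u, v} \<and> u \<noteq> v \<and> u \<in> U \<and> v \<in> U)"

definition adj :: "nat set set \<Rightarrow> nat \<Rightarrow> nat \<Rightarrow> bool" where
  "adj E u v \<longleftrightarrow> u \<noteq> v \<and> {u, v} \<in> E"

definition nbrs :: "nat set set \<Rightarrow> nat \<Rightarrow> nat set" where
  "nbrs E s = {u. adj E s u}"

definition walk_in :: "nat set set \<Rightarrow> nat set \<Rightarrow> nat list \<Rightarrow> bool" where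
  "walk_in E W xs \<longleftrightarrow> xs \<noteq> [] \<and> set xs \<subseteq> W \<and>
     (\<forall>i. Suc i < length xs \<longrightarrow> adj E (xs ! i) (xs ! Suc i))"

definition connected_in :: "nat set set \<Rightarrow> nat set \<Rightarrow> bool" where
  "connected_in E W \<longleftrightarrow> (\<forall>x\<in>W. \<forall>y\<in>W. \<exists>xs. walk_in E W xs \<and> hd xs = x \<and> last xs = y)"

definition has_cycle :: "nat set \<Rightarrow> nat set set \<Rightarrow> bool" where
  "has_cycle U E \<longleftrightarrow> (\<exists>xs. walk_in E U xs \<and> distinct xs \<and> length xs \<ge> 3 \<and> adj E (last xs) (hd xs))"

definition tree :: "nat set \<Rightarrow> nat set set \<Rightarrow> bool" where
  "tree U E \<longleftrightarrow> graph U E \<and> U \<noteq> {} \<and> connected_in E U \<and> \<not> has_cycle U E"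

definition gdist :: "nat set \<Rightarrow> nat set set \<Rightarrow> nat \<Rightarrow> nat \<Rightarrow> nat" where
  "gdist U E x y = (LEAST n. \<exists>xs. walk_in E U xs \<and> hd xs = x \<and> last xs = y \<and> length xs = Suc n)"

definition diam :: "nat set \<Rightarrow> nat set set \<Rightarrow> nat" where
  "diam U E = Max {gdist U E u v | u v. u \<in> U \<and> v \<in> U}"

text \<open>Binary tree: a tree that can be rooted at some r so that every vertex has at most two
  children (children of v = neighbours w of v farther from r than v).\<close>
definition binary_tree :: "nat set \<Rightarrow> nat set set \<Rightarrow> bool" where
  "binary_tree U E \<longleftrightarrow> tree U E \<and>
     (\<exists>r\<in>U. \<forall>v\<in>U. card {w \<in> U. adj E v w \<and> gdist U E r w = Suc (gdist U E r v)} \<le> 2)"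

definition cat :: "nat set set \<Rightarrow> nat \<Rightarrow> nat set set" where
  "cat S u = {C \<in> S. u \<in> C}"

definition memdim :: "nat set \<Rightarrow> nat set set \<Rightarrow> nat" where
  "memdim U S = Max ((\<lambda>u. card (cat S u)) ` U)"

definition internally_connected :: "nat set set \<Rightarrow> nat set set \<Rightarrow> bool" where
  "internally_connected E S \<longleftrightarrow> (\<forall>C\<in>S. connected_in E C)"

definition shattered :: "nat set \<Rightarrow> nat set set \<Rightarrow> nat set set \<Rightarrow> bool" where
  "shattered U E S \<longleftrightarrow> (\<forall>s\<in>U. \<forall>t\<in>U. s \<noteq> t \<longrightarrow>
     (\<exists>u\<in>nbrs E s. \<exists>C\<in>S. u \<in> C \<and> t \<in> C \<and> s \<notin> C))"

end

theory Submission
  imports Defs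
begin

lemma adj_sym: "adj E u v = adj E v u"
  by (auto simp: adj_def insert_commute)

lemma walk_single: "walk_in E W [x] \<longleftrightarrow> x \<in> W"
  by (auto simp: walk_in_def)

lemma all_idx: "(\<forall>i. Suc i < Suc n \<longrightarrow> P i) \<longleftrightarrow> (0 < n \<longrightarrow> P 0) \<and> (\<forall>i. Suc i < n \<longrightarrow> P (Suc i))"
  apply (rule iffI)
   apply simp
  apply clarify
  subgoal for i by (cases i) auto
  done

lemma walk_Cons2: "walk_in E W (x # y # zs) \<longleftrightarrow> x \<in> W \<and> adj E x y \<and> walk_in E W (y # zs)"
  unfolding walk_in_def length_Cons all_idx[where n="Suc (length zs)"]
  by auto

lemma walk_nonempty: "walk_in E W xs \<Longrightarrow> xs \<noteq> []"
  by (simp add: walk_in_def)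

lemma walk_append: "walk_in E W xs \<Longrightarrow> walk_in E W ys \<Longrightarrow> adj E (last xs) (hd ys) \<Longrightarrow> walk_in E W (xs @ ys)"
proof (induction xs)
  case Nil then show ?case by (simp add: walk_in_def)
next
  case (Cons x xs)
  obtain y ys' where ys: "ys = y # ys'" using Cons.prems(2) walk_nonempty by (cases ys) auto
  show ?case
  proof (cases xs)
    case Nil
    then show ?thesis using Cons.prems ys by (auto simp: walk_Cons2 walk_single)
  next
    case (Cons z zs)
    have "walk_in E W xs" "x \<in> W" "adj E x z" using Cons.prems(1) Cons by (auto simp: walk_Cons2)
    then have "walk_in E W (xs @ ys)" using Cons.IH Cons.prems Cons by auto
    then show ?thesis using \<open>x \<in> W\<close> \<open>adj E x z\<close> Cons by (simp add: walk_Cons2)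
  qed
qed

lemma walk_rev: "walk_in E W xs \<Longrightarrow> walk_in E W (rev xs)"
proof (induction xs)
  case Nil then show ?case by (simp add: walk_in_def)
next
  case (Cons x xs)
  show ?case
  proof (cases xs)
    case Nil then show ?thesis using Cons by simp
  next
    case (Cons z zs)
    have "walk_in E W xs" "x \<in> W" "adj E x z" using Cons.prems(1) Cons by (auto simp: walk_Cons2)
    have r1: "walk_in E W (rev xs)" using Cons.IH \<open>walk_in E W xs\<close> by simp
    have "last (rev xs) = z" using Cons by simp
    then have "walk_in E W (rev xs @ [x])"
      using r1 \<open>x \<in> W\<close> \<open>adj E x z\<close> by (intro walk_append) (auto simp: walk_single adj_sym)
    then show ?thesis by simp
  qed
qed

lemma walk_snoc: "walk_in E W (xs @ [v]) \<Longrightarrow> xs \<noteq> [] \<Longrightarrow> walk_in E W xs \<and> adj E (last xs) v"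
proof (induction xs)
  case Nil then show ?case by simp
next
  case (Cons x xs)
  show ?case
  proof (cases xs)
    case Nil then show ?thesis using Cons.prems by (simp add: walk_Cons2 walk_single)
  next
    case (Cons z zs)
    then show ?thesis using Cons.prems Cons.IH by (auto simp: walk_Cons2)
  qed
qed

lemma walk_trans: "walk_in E W xs \<Longrightarrow> walk_in E W ys \<Longrightarrow> last xs = hd ys \<Longrightarrow>
   \<exists>zs. walk_in E W zs \<and> hd zs = hd xs \<and> last zs = last ys"
proof -
  assume a: "walk_in E W xs" "walk_in E W ys" "last xs = hd ys"
  obtain y ys' where ys: "ys = y # ys'" using a(2) walk_nonempty by (cases ys) auto
  show ?thesis
  proof (cases ys')
    case Nil then show ?thesis using a ys by auto
  next
    case (Cons z zs)
    have "walk_in E W (xs @ ys')" using a ys Cons by (intro walk_append) (auto simp: walk_Cons2)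
    then show ?thesis using a ys Cons walk_nonempty by fastforce
  qed
qed


locale BT =
  fixes U :: "nat set" and E :: "nat set set" and r :: nat
  assumes fin: "finite U" and conn: "connected_in E U" and rU: "r \<in> U"
    and bin: "\<forall>v\<in>U. card {w \<in> U. adj E v w \<and> gdist U E r w = Suc (gdist U E r v)} \<le> 2"
begin

abbreviation dep where "dep v \<equiv> gdist U E r v"

lemma dep_walk: "v \<in> U \<Longrightarrow> \<exists>xs. walk_in E U xs \<and> hd xs = r \<and> last xs = v \<and> length xs = Suc (dep v)"
proof -
  assume v: "v \<in> U"
  obtain xs where xs: "walk_in E U xs" "hd xs = r" "last xs = v"
    using conn v rU unfolding connected_in_def by blast
  then have "length xs = Suc (length xs - 1)" using walk_nonempty by fastforce
  then have "\<exists>n. \<exists>xs. walk_in E U xs \<and> hd xs = r \<and> last xs = v \<and> length xs = Suc n" using xs by blast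
  then show ?thesis unfolding gdist_def by (rule LeastI_ex)
qed

lemma dep_le: "walk_in E U xs \<Longrightarrow> hd xs = r \<Longrightarrow> last xs = v \<Longrightarrow> dep v \<le> length xs - 1"
proof -
  assume xs: "walk_in E U xs" "hd xs = r" "last xs = v"
  then have "length xs = Suc (length xs - 1)" using walk_nonempty by fastforce
  then show ?thesis unfolding gdist_def using xs by (intro Least_le) blast
qed

lemma dep_r: "dep r = 0"
  using dep_le[of "[r]" r] rU by (simp add: walk_single)

lemma dep0: "v \<in> U \<Longrightarrow> dep v = 0 \<Longrightarrow> v = r"
proof -
  assume "v \<in> U" "dep v = 0"
  then obtain xs where "walk_in E U xs" "hd xs = r" "last xs = v" "length xs = 1"
    using dep_walk by fastforce
  then show ?thesis by (cases xs) auto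
qed

lemma dep_adj: "p \<in> U \<Longrightarrow> v \<in> U \<Longrightarrow> adj E p v \<Longrightarrow> dep v \<le> Suc (dep p)"
proof -
  assume a: "p \<in> U" "v \<in> U" "adj E p v"
  obtain xs where xs: "walk_in E U xs" "hd xs = r" "last xs = p" "length xs = Suc (dep p)"
    using dep_walk a by blast
  have "walk_in E U (xs @ [v])" using xs a by (intro walk_append) (auto simp: walk_single)
  moreover have "hd (xs @ [v]) = r" using xs walk_nonempty by fastforce
  ultimately have "dep v \<le> length (xs @ [v]) - 1" by (intro dep_le) auto
  then show ?thesis using xs by simp
qed

lemma dep_par_ex: "v \<in> U \<Longrightarrow> v \<noteq> r \<Longrightarrow> \<exists>p. p \<in> U \<and> adj E v p \<and> Suc (dep p) = dep v"
proof -
  assume a: "v \<in> U" "v \<noteq> r"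
  obtain xs where xs: "walk_in E U xs" "hd xs = r" "last xs = v" "length xs = Suc (dep v)"
    using dep_walk a by blast
  define ys where "ys = butlast xs"
  have xsne: "xs \<noteq> []" using xs walk_nonempty by auto
  have eq: "xs = ys @ [v]" unfolding ys_def by (metis append_butlast_last_id xsne xs(3))
  have ysne: "ys \<noteq> []" using eq xs a by auto
  have w: "walk_in E U ys" "adj E (last ys) v" using walk_snoc[of E U ys v] eq xs ysne by auto
  have hy: "hd ys = r" using eq xs ysne by (metis hd_append)
  have pU: "last ys \<in> U" using w ysne by (auto simp: walk_in_def)
  have "dep (last ys) \<le> length ys - 1" using dep_le w hy by blast
  moreover have "length ys = dep v" using eq xs by simp
  moreover have "dep v \<le> Suc (dep (last ys))" using dep_adj pU a w by blast
  ultimately show ?thesis using pU w adj_sym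
    by (metis Suc_pred' le_antisym le_SucE length_greater_0_conv not_less_eq_eq ysne)
qed

definition par where
  "par v = (if v = r then r else SOME p. p \<in> U \<and> adj E v p \<and> Suc (dep p) = dep v)"

lemma par_r[simp]: "par r = r" by (simp add: par_def)

lemma par_props: "v \<in> U \<Longrightarrow> v \<noteq> r \<Longrightarrow> par v \<in> U \<and> adj E v (par v) \<and> Suc (dep (par v)) = dep v"
  unfolding par_def using dep_par_ex[of v] by (simp, metis (mono_tags, lifting) someI_ex)

lemma par_U: "v \<in> U \<Longrightarrow> par v \<in> U"
  using par_props by (cases "v = r") auto

lemma parK_U: "v \<in> U \<Longrightarrow> (par^^k) v \<in> U"
  by (induction k) (auto simp: par_U)

lemma parK_r: "(par^^k) r = r"
  by (induction k) auto

lemma dep_parK: "v \<in> U \<Longrightarrow> dep ((par^^k) v) = dep v - k"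
proof (induction k)
  case 0 then show ?case by simp
next
  case (Suc k)
  define y where "y = (par^^k) v"
  have yU: "y \<in> U" using parK_U Suc y_def by blast
  show ?case
  proof (cases "y = r")
    case True
    then show ?thesis using Suc y_def dep_r by simp
  next
    case False
    have e1: "Suc (dep (par y)) = dep y" using par_props[OF yU False] by simp
    have e2: "dep y = dep v - k" using Suc y_def by simp
    have "(par^^Suc k) v = par y" by (simp add: y_def)
    then show ?thesis using e1 e2 by simp
  qed
qed

lemma parK_dep: "v \<in> U \<Longrightarrow> (par^^(dep v)) v = r"
  using dep_parK[of v "dep v"] dep0 parK_U by simp

lemma parK_big: "v \<in> U \<Longrightarrow> dep v \<le> k \<Longrightarrow> (par^^k) v = r"
proof -
  assume a: "v \<in> U" "dep v \<le> k"
  have "(par^^k) v = (par^^(k - dep v)) ((par^^(dep v)) v)"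
    using a by (metis funpow_add le_add_diff_inverse2 o_apply)
  then show ?thesis using parK_dep a parK_r by simp
qed

lemma parK_reduce: "v \<in> U \<Longrightarrow> (par^^k) v = x \<Longrightarrow> \<exists>i\<le>dep v. (par^^i) v = x"
  by (metis linorder_le_cases order_refl parK_big)

lemma parK_Suc: "(par^^(Suc k)) v = (par^^k) (par v)"
  by (simp add: funpow_swap1)

lemma reach: "v \<in> U \<Longrightarrow> (\<forall>j\<le>k. (par^^j) v \<in> C) \<Longrightarrow>
   \<exists>xs. walk_in E C xs \<and> hd xs = v \<and> last xs = (par^^k) v"
proof (induction k arbitrary: v)
  case 0 then show ?case by (intro exI[of _ "[v]"]) (auto simp: walk_single)
next
  case (Suc k)
  have "\<forall>j\<le>k. (par^^j) (par v) \<in> C" using Suc.prems(2) parK_Suc by (metis Suc_le_mono)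
  then obtain xs where xs: "walk_in E C xs" "hd xs = par v" "last xs = (par^^k) (par v)"
    using Suc.IH[of "par v"] par_U Suc.prems by blast
  show ?case
  proof (cases "v = r")
    case True then show ?thesis using xs parK_Suc by (metis par_r)
  next
    case False
    have "v \<in> C" using Suc.prems(2) by (metis funpow_0 le0)
    then have "walk_in E C ([v] @ xs)" using xs par_props[OF Suc.prems(1) False]
      by (intro walk_append) (auto simp: walk_single)
    then show ?thesis using xs walk_nonempty parK_Suc by fastforce
  qed
qed

lemma conn_lemma:
  assumes "C \<subseteq> U" and "\<forall>v\<in>C. \<exists>k. (par^^k) v = x \<and> (\<forall>j\<le>k. (par^^j) v \<in> C)"
  shows "connected_in E C"
  unfolding connected_in_def
proof (intro ballI)
  fix a b assume ab: "a \<in> C" "b \<in> C"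
  obtain xa where xa: "walk_in E C xa" "hd xa = a" "last xa = x"
    using assms ab reach by blast
  obtain xb where xb: "walk_in E C xb" "hd xb = b" "last xb = x"
    using assms ab reach by blast
  have "walk_in E C (rev xb)" using xb walk_rev by blast
  moreover have "hd (rev xb) = x" "last (rev xb) = b" using xb walk_nonempty
    by (auto simp: hd_rev last_rev)
  ultimately show "\<exists>xs. walk_in E C xs \<and> hd xs = a \<and> last xs = b"
    using walk_trans[OF xa(1)] xa by fastforce
qed


definition sub where "sub x = {v \<in> U. \<exists>k. (par^^k) v = x}"
definition Cw where "Cw c d = {v \<in> sub (par c). \<not> (v \<in> sub c \<and> d \<le> dep v)}"
definition SS where
  "SS = {sub c | c. c \<in> U \<and> c \<noteq> r} \<union> {Cw c d | c d. c \<in> U \<and> c \<noteq> r \<and> d \<le> diam U E}"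

lemma parK_comp: "(par^^i) ((par^^j) v) = (par^^(i+j)) v"
  by (simp add: funpow_add)

lemma dep_le_D: "v \<in> U \<Longrightarrow> dep v \<le> diam U E"
  unfolding diam_def using rU fin
  by (intro Max_ge) (auto intro: finite_image_set2)

lemma SS_Pow: "SS \<subseteq> Pow U"
  unfolding SS_def sub_def Cw_def by auto

lemma sub_conn: "connected_in E (sub c)"
proof (rule conn_lemma[of _ c])
  show "sub c \<subseteq> U" by (auto simp: sub_def)
  show "\<forall>v\<in>sub c. \<exists>k. (par^^k) v = c \<and> (\<forall>j\<le>k. (par^^j) v \<in> sub c)"
  proof
    fix v assume v: "v \<in> sub c"
    then obtain k where k: "(par^^k) v = c" "v \<in> U" by (auto simp: sub_def)
    have "\<forall>j\<le>k. (par^^j) v \<in> sub c"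
    proof (intro allI impI)
      fix j assume "j \<le> k"
      then have "(par^^(k-j)) ((par^^j) v) = c" using k parK_comp by simp
      then show "(par^^j) v \<in> sub c" using parK_U k by (auto simp: sub_def)
    qed
    then show "\<exists>k. (par^^k) v = c \<and> (\<forall>j\<le>k. (par^^j) v \<in> sub c)" using k by blast
  qed
qed

lemma dep_parK_le: "v \<in> U \<Longrightarrow> dep ((par^^k) v) \<le> dep v"
  using dep_parK by simp

lemma Cw_conn: "connected_in E (Cw c d)"
proof (rule conn_lemma[of _ "par c"])
  show "Cw c d \<subseteq> U" by (auto simp: Cw_def sub_def)
  show "\<forall>v\<in>Cw c d. \<exists>k. (par^^k) v = par c \<and> (\<forall>j\<le>k. (par^^j) v \<in> Cw c d)"
  proof
    fix v assume v: "v \<in> Cw c d"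
    then obtain k where k: "(par^^k) v = par c" "v \<in> U" by (auto simp: sub_def Cw_def)
    have nv: "\<not> (v \<in> sub c \<and> d \<le> dep v)" using v by (auto simp: Cw_def)
    have "\<forall>j\<le>k. (par^^j) v \<in> Cw c d"
    proof (intro allI impI)
      fix j assume "j \<le> k"
      then have "(par^^(k-j)) ((par^^j) v) = par c" using k parK_comp by simp
      then have a: "(par^^j) v \<in> sub (par c)" using parK_U k by (auto simp: sub_def)
      have b: "\<not> ((par^^j) v \<in> sub c \<and> d \<le> dep ((par^^j) v))"
      proof
        assume h: "(par^^j) v \<in> sub c \<and> d \<le> dep ((par^^j) v)"
        then obtain i where "(par^^i) ((par^^j) v) = c" by (auto simp: sub_def)
        then have "v \<in> sub c" using k parK_comp by (auto simp: sub_def)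
        moreover have "d \<le> dep v" using h dep_parK_le[OF k(2), of j] by linarith
        ultimately show False using nv by blast
      qed
      show "(par^^j) v \<in> Cw c d" using a b by (simp add: Cw_def)
    qed
    then show "\<exists>k. (par^^k) v = par c \<and> (\<forall>j\<le>k. (par^^j) v \<in> Cw c d)" using k by blast
  qed
qed

lemma SS_conn: "internally_connected E SS"
  unfolding internally_connected_def SS_def using sub_conn Cw_conn by auto


lemma SS_shattered: "shattered U E SS"
  unfolding shattered_def
proof (intro ballI impI)
  fix s t assume st: "s \<in> U" "t \<in> U" "s \<noteq> t"
  show "\<exists>u\<in>nbrs E s. \<exists>C\<in>SS. u \<in> C \<and> t \<in> C \<and> s \<notin> C"
  proof (cases "\<exists>k. (par^^k) t = s")
    case True
    define k where "k = (LEAST k. (par^^k) t = s)"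
    have k: "(par^^k) t = s" using True unfolding k_def by (rule LeastI_ex)
    have k0: "k \<noteq> 0" using k st(3) by (cases k) auto
    define c where "c = (par^^(k-1)) t"
    have pc: "par c = s" using k k0 c_def parK_comp[of 1 "k-1" t] by simp
    have cs: "c \<noteq> s"
    proof
      assume "c = s"
      then have "(par^^(k-1)) t = s" using c_def by simp
      then have "k \<le> k - 1" unfolding k_def by (rule Least_le)
      then show False using k0 by simp
    qed
    have cr: "c \<noteq> r" using pc cs by auto
    have cU: "c \<in> U" using parK_U st c_def by simp
    have adj: "adj E s c" using par_props[OF cU cr] pc adj_sym by metis
    have sc: "sub c \<in> SS" using cU cr unfolding SS_def by blast
    have "c \<in> sub c" using cU unfolding sub_def by (auto intro: exI[of _ 0])
    moreover have "t \<in> sub c" using st c_def unfolding sub_def by blast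
    moreover have "s \<notin> sub c"
    proof
      assume "s \<in> sub c"
      then obtain i where "(par^^i) s = c" by (auto simp: sub_def)
      then have "dep c \<le> dep s" using dep_parK_le st by blast
      moreover have "Suc (dep s) = dep c" using par_props[OF cU cr] pc by simp
      ultimately show False by simp
    qed
    ultimately show ?thesis using adj sc unfolding nbrs_def by blast
  next
    case False
    have sr: "s \<noteq> r" using False parK_dep[OF st(2)] by blast
    define A where "A = {k. \<exists>j. (par^^k) s = (par^^j) t}"
    have "(par^^(dep s)) s = (par^^(dep t)) t" using parK_dep st by simp
    then have "dep s \<in> A" unfolding A_def by blast
    define k where "k = (LEAST k. k \<in> A)"
    have kA: "k \<in> A" using \<open>dep s \<in> A\<close> unfolding k_def by (rule LeastI)
    then obtain j where j: "(par^^k) s = (par^^j) t" unfolding A_def by blast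
    have k0: "k \<noteq> 0"
    proof
      assume "k = 0"
      then have "s = (par^^j) t" using j by simp
      then show False using False by metis
    qed
    define c where "c = (par^^(k-1)) s"
    define w where "w = (par^^k) s"
    have pc: "par c = w" using k0 c_def w_def parK_comp[of 1 "k-1" s] by simp
    have notA: "k - 1 \<notin> A"
    proof
      assume "k - 1 \<in> A"
      then have "k \<le> k - 1" unfolding k_def by (rule Least_le)
      then show False using k0 by simp
    qed
    have cU: "c \<in> U" using parK_U st c_def by simp
    have cr: "c \<noteq> r"
    proof
      assume "c = r"
      then have "w = c" using pc by simp
      then have "(par^^(k-1)) s = (par^^j) t" using j c_def w_def by simp
      then have "k - 1 \<in> A" unfolding A_def by blast
      then show False using notA by simp
    qed
    define C where "C = Cw c (dep s)"
    have CS: "C \<in> SS" unfolding SS_def C_def using cU cr dep_le_D[OF st(1)] by blast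
    have ps: "par s \<in> U" "adj E s (par s)" "Suc (dep (par s)) = dep s" using par_props[OF st(1) sr] by auto
    have "s \<in> sub c" using st c_def unfolding sub_def by blast
    then have "s \<notin> C" unfolding C_def Cw_def by auto
    moreover have "par s \<in> C"
    proof -
      have "(par^^(k-1)) (par s) = w" using w_def k0 parK_Suc[of "k-1" s] by simp
      then have "par s \<in> sub w" using ps(1) unfolding sub_def by blast
      then have "par s \<in> sub (par c)" using pc by simp
      then show ?thesis using ps unfolding C_def Cw_def by auto
    qed
    moreover have "t \<in> C"
    proof -
      have "(par^^j) t = par c" using pc j w_def by simp
      then have "t \<in> sub (par c)" using st unfolding sub_def by blast
      moreover have "t \<notin> sub c"
      proof
        assume "t \<in> sub c"
        then obtain i where "(par^^i) t = c" by (auto simp: sub_def)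
        then have "(par^^(k-1)) s = (par^^i) t" using c_def by simp
        then have "k - 1 \<in> A" unfolding A_def by blast
        then show False using notA by simp
      qed
      ultimately show ?thesis unfolding C_def Cw_def by auto
    qed
    ultimately show ?thesis using CS ps unfolding nbrs_def by blast
  qed
qed


definition ch where "ch w = {c \<in> U. adj E w c \<and> dep c = Suc (dep w)}"

lemma cat_bound:
  assumes u: "u \<in> U"
  shows "card (cat SS u) \<le> (diam U E + 1) + (diam U E + 1) * (2 * (diam U E + 1))"
proof -
  let ?D = "diam U E"
  define F1 where "F1 = (\<lambda>k. sub ((par^^k) u)) ` {0..?D}"
  define I where "I = (SIGMA k:{0..?D}. ch ((par^^k) u) \<times> {0..?D})"
  define F2 where "F2 = (\<lambda>(k,c,d). Cw c d) ` I"
  have sub: "cat SS u \<subseteq> F1 \<union> F2"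
  proof
    fix C assume C: "C \<in> cat SS u"
    then have uC: "u \<in> C" and CS: "C \<in> SS" by (auto simp: cat_def)
    show "C \<in> F1 \<union> F2"
    proof (cases "C \<in> {sub c | c. c \<in> U \<and> c \<noteq> r}")
      case True
      then obtain c where c: "C = sub c" by blast
      then obtain k where "(par^^k) u = c" using uC by (auto simp: sub_def)
      then obtain i where i: "i \<le> dep u" "(par^^i) u = c" using parK_reduce u by blast
      then have "i \<in> {0..?D}" using dep_le_D[OF u] by simp
      moreover have "C = (\<lambda>k. sub ((par^^k) u)) i" using c i by simp
      ultimately have "C \<in> F1" unfolding F1_def by (rule rev_image_eqI)
      then show ?thesis by (rule UnI1)
    next
      case False
      then obtain c d where cd: "C = Cw c d" "c \<in> U" "c \<noteq> r" "d \<le> ?D"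
        using CS unfolding SS_def by blast
      then obtain k where "(par^^k) u = par c" using uC by (auto simp: sub_def Cw_def)
      then obtain i where i: "i \<le> dep u" "(par^^i) u = par c" using parK_reduce u by blast
      have pp: "adj E c (par c)" "Suc (dep (par c)) = dep c" using par_props[OF cd(2,3)] by auto
      then have "adj E (par c) c" by (simp add: adj_sym)
      then have "c \<in> ch (par c)" using pp cd(2) unfolding ch_def by simp
      then have "(i, c, d) \<in> I" using i cd dep_le_D[OF u] unfolding I_def by auto
      moreover have "C = (\<lambda>(k,c,d). Cw c d) (i, c, d)" using cd by simp
      ultimately have "C \<in> F2" unfolding F2_def by (rule rev_image_eqI)
      then show ?thesis by (rule UnI2)
    qed
  qed
  have chfin: "\<And>w. finite (ch w)" using fin unfolding ch_def by simp
  have chc: "\<And>k. card (ch ((par^^k) u)) \<le> 2"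
    unfolding ch_def by (rule bin[rule_format, OF parK_U[OF u]])
  have cF1: "card F1 \<le> ?D + 1" unfolding F1_def using card_image_le[of "{0..?D}"] by simp
  have "card I = (\<Sum>k\<in>{0..?D}. card (ch ((par^^k) u) \<times> {0..?D}))"
    unfolding I_def using chfin by (intro card_SigmaI) auto
  also have "\<dots> \<le> (\<Sum>k\<in>{0..?D}. 2 * (?D + 1))"
  proof (rule sum_mono)
    fix k assume "k \<in> {0..?D}"
    show "card (ch ((par^^k) u) \<times> {0..?D}) \<le> 2 * (?D + 1)"
      using mult_le_mono1[OF chc[of k], of "?D + 1"] by (simp add: card_cartesian_product)
  qed
  also have "\<dots> = (?D + 1) * (2 * (?D + 1))" by simp
  finally have cI: "card I \<le> (?D + 1) * (2 * (?D + 1))" by simp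
  have finI: "finite I" unfolding I_def using chfin by auto
  have "card F2 \<le> card I" unfolding F2_def by (rule card_image_le[OF finI])
  then have cF2: "card F2 \<le> (?D + 1) * (2 * (?D + 1))" using cI by linarith
  have fF: "finite (F1 \<union> F2)" unfolding F1_def F2_def using finI by auto
  have "card (cat SS u) \<le> card (F1 \<union> F2)" using card_mono[OF fF sub] .
  also have "\<dots> \<le> card F1 + card F2" by (rule card_Un_le)
  finally show ?thesis using cF1 cF2 by linarith
qed

lemma main: "\<exists>S. S \<subseteq> Pow U \<and> shattered U E S \<and> internally_connected E S \<and>
          memdim U S \<le> 12 * (diam U E)^2"
proof (intro exI[of _ SS] conjI SS_Pow SS_shattered SS_conn)
  let ?D = "diam U E"
  have "\<forall>u\<in>U. card (cat SS u) \<le> 12 * ?D^2"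
  proof
    fix u assume u: "u \<in> U"
    show "card (cat SS u) \<le> 12 * ?D^2"
    proof (cases "\<exists>v\<in>U. v \<noteq> r")
      case True
      then obtain v where v: "v \<in> U" "v \<noteq> r" by blast
      have "dep v \<noteq> 0" using dep0 v by blast
      then have D1: "1 \<le> ?D" using dep_le_D[OF v(1)] by linarith
      have "(?D + 1) + (?D + 1) * (2 * (?D + 1)) \<le> 12 * ?D^2"
      proof -
        have "?D + 1 \<le> 2 * ?D" using D1 by simp
        then have "(?D + 1) * (?D + 1) \<le> (2 * ?D) * (2 * ?D)" by (intro mult_le_mono) auto
        moreover have "?D + 1 \<le> (?D + 1) * (?D + 1)" by simp
        ultimately show ?thesis by (simp add: power2_eq_square algebra_simps)
      qed
      then show ?thesis using cat_bound[OF u] by linarith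
    next
      case False
      then have "SS = {}" unfolding SS_def by auto
      then show ?thesis by (simp add: cat_def)
    qed
  qed
  then show "memdim U SS \<le> 12 * ?D^2"
    unfolding memdim_def using fin rU by (subst Max_le_iff) auto
qed

end

theorem lemma5:
  "\<exists>c::nat. \<forall>(U::nat set) (E::nat set set). binary_tree U E \<longrightarrow>
     (\<exists>S. S \<subseteq> Pow U \<and> shattered U E S \<and> internally_connected E S \<and>
          memdim U S \<le> c * (diam U E)^2)"
proof (intro exI[of _ 12] allI impI)
  fix U E assume h: "binary_tree U E"
  then obtain r where "r \<in> U"
    "\<forall>v\<in>U. card {w \<in> U. adj E v w \<and> gdist U E r w = Suc (gdist U E r v)} \<le> 2"
    unfolding binary_tree_def by blast
  moreover have "finite U" "connected_in E U" using h by (auto simp: binary_tree_def tree_def graph_def)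
  ultimately interpret BT U E r by unfold_locales auto
  show "\<exists>S. S \<subseteq> Pow U \<and> shattered U E S \<and> internally_connected E S \<and>
          memdim U S \<le> 12 * (diam U E)^2" by (rule main)
qed

end
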